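(* In the setting described in the context (with $n$ sufficiently large), for every parameter $t\ge 0.02$, \[ w_G(Q_t)\le (1+m^{-3})\,w_G(B_2^n). \] In particular, for $t=0.02$ and all sufficiently large $n$, \[ w_G(Q)\le t\,w_G(Q_t)\le 0.05\,w_G(B_2^n). \]
   Context: Let $C_1$ be an absolute constant such that for every sufficiently large $n$ and every $2\le m\le \exp(n/C_1)$ there exist $y_1,\dots,y_m\in\mathbb{R}^n$ with $\frac12\sqrt n\le\|y_i\|\le 2\sqrt n$ and $|\langle y_i,y_j\rangle|\le C_1\sqrt{n\log m}$ for $i\ne j$. Let $C_2$ be an absolute constant such that for all unit vectors $v_1,\dots,v_m\in S^{n-1}$ and $X$ distributed as $N(0,I_n)$, uniformly on $\sqrt n S^{n-1}$, or uniformly on $\sqrt n B_2^n$, one has $\mathbb{P}(\max_{i}|\langle v_i,X\rangle|\ge C_2\sqrt{\log m})\le m^{-10}$. Set $C_0=\max(C_1,100C_2)$. Let $n$ be sufficiently large, $m$ an integer with $C_0 n\le m\le \exp(n/C_0)$, and $\Delta=C_0\sqrt{\log m}$. Let $x_1,\dots,x_m\in\mathbb{R}^n$ be a quasi-orthogonal system, i.e. $\frac{\sqrt n}{2\Delta}\le\|x_i\|\le\frac{2\sqrt n}{\Delta}$ for all $i$ and $|\langle x_i,x_j\rangle|\le \frac{\sqrt n}{\Delta}$ for $i\ne j$. $B_2^n$ is the Euclidean unit ball. Define $Q=\operatorname{conv}\{\pm x_i: i\in[m]\}$ and, for $t>0$, $Q_t=\operatorname{conv}(\frac1t Q\cup B_2^n)$.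 For a compact set $L\subseteq\mathbb{R}^n$, the Gaussian mean width is $w_G(L)=\mathbb{E}\sup_{x\in L}\langle x,G\rangle$ with $G\sim N(0,I_n)$. *)

theory Defs
  imports "HOL-Analysis.Analysis" "HOL-Probability.Probability"
begin

text \<open>Vectors of R^n are represented as functions nat => real that are
extensional on the index set {..<n} (coordinates 0..n-1).\<close>

definition Rn :: "nat \<Rightarrow> (nat \<Rightarrow> real) set" where
  "Rn n = PiE {..<n} (\<lambda>_. UNIV)"

definition ipn :: "nat \<Rightarrow> (nat \<Rightarrow> real) \<Rightarrow> (nat \<Rightarrow> real) \<Rightarrow> real" where
  "ipn n u v = (\<Sum>i<n. u i * v i)"

definition nrmn :: "nat \<Rightarrow> (nat \<Rightarrow> real) \<Rightarrow> real" where
  "nrmn n u = sqrt (ipn n u u)"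

definition unit_ball_n :: "nat \<Rightarrow> (nat \<Rightarrow> real) set" where
  "unit_ball_n n = {x \<in> Rn n. nrmn n x \<le> 1}"

definition conv_hull_n :: "(nat \<Rightarrow> real) set \<Rightarrow> (nat \<Rightarrow> real) set" where
  "conv_hull_n S = {y. \<exists>F c. finite F \<and> F \<subseteq> S \<and> (\<forall>v\<in>F. 0 \<le> c v) \<and> sum c F = 1
        \<and> y = (\<lambda>i. \<Sum>v\<in>F. c v * v i)}"

definition gauss_meas :: "nat \<Rightarrow> (nat \<Rightarrow> real) measure" where
  "gauss_meas n = PiM {..<n} (\<lambda>_. density lborel std_normal_density)"

definition ball_unif_meas :: "nat \<Rightarrow> (nat \<Rightarrow> real) measure" where
  "ball_unif_meas n = uniform_measure (PiM {..<n} (\<lambda>_. lborel))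
      {x \<in> Rn n. nrmn n x \<le> sqrt (real n)}"

text \<open>Uniform (normalized rotation invariant) distribution on sqrt n S^{n-1},
  realised as the law of sqrt n G / |G| for G standard Gaussian.\<close>
definition sphere_unif_meas :: "nat \<Rightarrow> (nat \<Rightarrow> real) measure" where
  "sphere_unif_meas n = distr (gauss_meas n) (PiM {..<n} (\<lambda>_. borel))
      (\<lambda>g. restrict (\<lambda>i. sqrt (real n) * g i / nrmn n g) {..<n})"

definition gauss_width :: "nat \<Rightarrow> (nat \<Rightarrow> real) set \<Rightarrow> real" where
  "gauss_width n L = integral\<^sup>L (gauss_meas n) (\<lambda>g. SUP x\<in>L. ipn n x g)"

definition C1_prop :: "real \<Rightarrow> bool" where
  "C1_prop C1 \<longleftrightarrow> (\<exists>N. \<forall>n\<ge>N. \<forall>m::nat. 2 \<le> m \<and> real m \<le> exp (real n / C1) \<longrightarrow>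
     (\<exists>y::nat \<Rightarrow> nat \<Rightarrow> real.
        (\<forall>i<m. y i \<in> Rn n \<and> sqrt (real n) / 2 \<le> nrmn n (y i) \<and> nrmn n (y i) \<le> 2 * sqrt (real n)) \<and>
        (\<forall>i<m. \<forall>j<m. i \<noteq> j \<longrightarrow> \<bar>ipn n (y i) (y j)\<bar> \<le> C1 * sqrt (real n * ln (real m)))))"

definition C2_prop :: "real \<Rightarrow> bool" where
  "C2_prop C2 \<longleftrightarrow> (\<forall>n m::nat. \<forall>v::nat \<Rightarrow> nat \<Rightarrow> real. \<forall>M.
     1 \<le> m \<longrightarrow> (\<forall>i<m. v i \<in> Rn n \<and> nrmn n (v i) = 1) \<longrightarrow>
     M \<in> {gauss_meas n, sphere_unif_meas n, ball_unif_meas n} \<longrightarrow>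
     measure M {X \<in> space M. (MAX i\<in>{..<m}. \<bar>ipn n (v i) X\<bar>) \<ge> C2 * sqrt (ln (real m))}
       \<le> real m powr (-10))"

definition quasi_orth :: "nat \<Rightarrow> nat \<Rightarrow> real \<Rightarrow> (nat \<Rightarrow> nat \<Rightarrow> real) \<Rightarrow> bool" where
  "quasi_orth n m \<Delta> x \<longleftrightarrow>
     (\<forall>i<m. x i \<in> Rn n \<and> sqrt (real n) / (2 * \<Delta>) \<le> nrmn n (x i)
             \<and> nrmn n (x i) \<le> 2 * sqrt (real n) / \<Delta>) \<and>
     (\<forall>i<m. \<forall>j<m. i \<noteq> j \<longrightarrow> \<bar>ipn n (x i) (x j)\<bar> \<le> sqrt (real n) / \<Delta>)"

definition Qset :: "nat \<Rightarrow> (nat \<Rightarrow> nat \<Rightarrow> real) \<Rightarrow> (nat \<Rightarrow> real) set" where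
  "Qset m x = conv_hull_n (x ` {..<m} \<union> (\<lambda>i. \<lambda>j. - x i j) ` {..<m})"

definition Qt_set :: "nat \<Rightarrow> nat \<Rightarrow> (nat \<Rightarrow> nat \<Rightarrow> real) \<Rightarrow> real \<Rightarrow> (nat \<Rightarrow> real) set" where
  "Qt_set n m x t = conv_hull_n ((\<lambda>y. \<lambda>j. y j / t) ` Qset m x \<union> unit_ball_n n)"

end

theory Submission
  imports Defs
begin


abbreviation "N1 \<equiv> density lborel (\<lambda>x. ennreal (std_normal_density x))"

lemma N1_prob: "prob_space N1"
  by (rule prob_space_normal_density) auto

lemma gauss_prob: "prob_space (gauss_meas n)"
  unfolding gauss_meas_def by (rule prob_space_PiM) (rule N1_prob)

lemma space_gauss: "space (gauss_meas n) = Rn n"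
  by (simp add: gauss_meas_def space_PiM Rn_def)

lemma sets_gauss: "sets (gauss_meas n) = sets (PiM {..<n} (\<lambda>_. borel))"
  unfolding gauss_meas_def by (rule sets_PiM_cong) auto

lemma comp_meas: "i < n \<Longrightarrow> (\<lambda>g. g i) \<in> measurable (gauss_meas n) N1"
  unfolding gauss_meas_def by (rule measurable_component_singleton) auto

lemma comp_borel[measurable]: "(\<lambda>g. g i) \<in> borel_measurable (gauss_meas n)"
proof (cases "i < n")
  case True
  then show ?thesis using comp_meas[OF True] by (simp add: measurable_def)
next
  case False
  have "\<forall>g\<in>space (gauss_meas n). g i = undefined"
    using False by (auto simp: space_gauss Rn_def PiE_def extensional_def)
  then show ?thesis
    by (metis (no_types, lifting) borel_measurable_const measurable_cong)
qed

lemma gauss_comp: "i < n \<Longrightarrow> distr (gauss_meas n) N1 (\<lambda>\<omega>. \<omega> i) = N1"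
  unfolding gauss_meas_def by (rule distr_PiM_component) (auto intro: N1_prob)

lemma gauss_comp_integral:
  fixes f :: "real \<Rightarrow> real"
  assumes "f \<in> borel_measurable borel" "i < n"
  shows "integral\<^sup>L (gauss_meas n) (\<lambda>g. f (g i)) = integral\<^sup>L N1 f"
    and "integrable (gauss_meas n) (\<lambda>g. f (g i)) = integrable N1 f"
proof -
  have m: "(\<lambda>g. g i) \<in> measurable (gauss_meas n) N1" using comp_meas assms by auto
  have f: "f \<in> borel_measurable N1" using assms(1) by simp
  show "integral\<^sup>L (gauss_meas n) (\<lambda>g. f (g i)) = integral\<^sup>L N1 f"
    using integral_distr[OF m f] gauss_comp[OF assms(2)] by simp
  show "integrable (gauss_meas n) (\<lambda>g. f (g i)) = integrable N1 f"
    using integrable_distr_eq[OF m f] gauss_comp[OF assms(2)] by simp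
qed

lemma N1_sq: "integrable N1 (\<lambda>x. x^2)" "integral\<^sup>L N1 (\<lambda>x. x^2) = 1"
proof -
  have "integrable lborel (\<lambda>x. std_normal_density x * x^(2*1))"
    by (rule integrable_std_normal_moment)
  then show "integrable N1 (\<lambda>x. x^2)"
    by (subst integrable_density) (auto simp: normal_density_nonneg)
  have "integral\<^sup>L lborel (\<lambda>x. std_normal_density x * x^(2*1)) = 1"
    by (subst integral_std_normal_moment_even) simp
  then show "integral\<^sup>L N1 (\<lambda>x. x^2) = 1"
    by (subst integral_density) (auto simp: normal_density_nonneg)
qed

lemma N1_abs: "integrable N1 abs" "integral\<^sup>L N1 abs = sqrt (2/pi)"
proof -
  have "integrable lborel (\<lambda>x. std_normal_density x * \<bar>x\<bar>^(2*0+1))"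
    by (rule integrable_std_normal_moment_abs)
  then show "integrable N1 abs"
    by (subst integrable_density) (auto simp: normal_density_nonneg)
  have "integral\<^sup>L lborel (\<lambda>x. std_normal_density x * \<bar>x\<bar>^(2*0+1)) = sqrt (2/pi)"
    by (subst integral_std_normal_moment_abs_odd) simp
  then show "integral\<^sup>L N1 abs = sqrt (2/pi)"
    by (subst integral_density) (auto simp: normal_density_nonneg)
qed

lemma ipn_meas[measurable]: "(\<lambda>g. ipn n v g) \<in> borel_measurable (gauss_meas n)"
  unfolding ipn_def by (intro borel_measurable_sum borel_measurable_times borel_measurable_const comp_borel)

lemma nrmn_meas[measurable]: "(\<lambda>g. nrmn n g) \<in> borel_measurable (gauss_meas n)"
  unfolding nrmn_def ipn_def
  by (rule measurable_compose[OF _ borel_measurable_sqrt])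
     (intro borel_measurable_sum borel_measurable_times comp_borel)

lemma ipn_self: "ipn n g g = (\<Sum>i<n. (g i)^2)"
  by (simp add: ipn_def power2_eq_square)

lemma ipn_nonneg: "0 \<le> ipn n g g"
  unfolding ipn_def by (intro sum_nonneg) simp

lemma nrmn_sq: "(nrmn n g)^2 = (\<Sum>i<n. (g i)^2)"
  unfolding nrmn_def using ipn_nonneg[of n g] by (simp add: ipn_self)

lemma nrmn_nonneg: "0 \<le> nrmn n g" using ipn_nonneg[of n g] by (simp add: nrmn_def)

lemma gauss_sq: "integrable (gauss_meas n) (\<lambda>g. (nrmn n g)^2)"
   "integral\<^sup>L (gauss_meas n) (\<lambda>g. (nrmn n g)^2) = real n"
proof -
  have i: "integrable (gauss_meas n) (\<lambda>g. (g i)^2)" if "i < n" for i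
    using gauss_comp_integral(2)[of "\<lambda>x. x^2" i n] that N1_sq by simp
  have v: "integral\<^sup>L (gauss_meas n) (\<lambda>g. (g i)^2) = 1" if "i < n" for i
    using gauss_comp_integral(1)[of "\<lambda>x. x^2" i n] that N1_sq by simp
  show "integrable (gauss_meas n) (\<lambda>g. (nrmn n g)^2)"
    unfolding nrmn_sq by (rule Bochner_Integration.integrable_sum) (rule i, simp)
  show "integral\<^sup>L (gauss_meas n) (\<lambda>g. (nrmn n g)^2) = real n"
    unfolding nrmn_sq using i v by (subst Bochner_Integration.integral_sum) auto
qed

lemma comp_le_nrmn: "i < n \<Longrightarrow> \<bar>g i\<bar> \<le> nrmn n g"
proof -
  assume "i < n"
  then have "(g i)^2 \<le> (\<Sum>j<n. (g j)^2)"
    by (intro member_le_sum) auto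
  then have "sqrt ((g i)^2) \<le> sqrt (\<Sum>j<n. (g j)^2)" by (rule real_sqrt_le_mono)
  then show ?thesis by (simp add: nrmn_def ipn_self)
qed

lemma gauss_nrmn_int: "integrable (gauss_meas n) (nrmn n)"
proof (rule Bochner_Integration.integrable_bound[OF _ _ AE_I2])
  show "integrable (gauss_meas n) (\<lambda>g. 1 + (nrmn n g)^2)"
    by (intro Bochner_Integration.integrable_add finite_measure.integrable_const prob_space.finite_measure[OF gauss_prob] gauss_sq(1))
  show "nrmn n \<in> borel_measurable (gauss_meas n)" by measurable
  fix g show "norm (nrmn n g) \<le> norm (1 + (nrmn n g)^2)"
    using nrmn_nonneg[of n g] zero_le_power2[of "nrmn n g - 1"]
    by (simp add: power2_eq_square algebra_simps)
qed

lemma gauss_nrmn_lower: "1 \<le> n \<Longrightarrow> sqrt (2/pi) \<le> integral\<^sup>L (gauss_meas n) (nrmn n)"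
proof -
  assume "1 \<le> n"
  have "integral\<^sup>L (gauss_meas n) (\<lambda>g. \<bar>g 0\<bar>) = sqrt (2/pi)"
    using gauss_comp_integral(1)[of abs 0 n] \<open>1 \<le> n\<close> N1_abs by simp
  moreover have "integral\<^sup>L (gauss_meas n) (\<lambda>g. \<bar>g 0\<bar>) \<le> integral\<^sup>L (gauss_meas n) (nrmn n)"
    using comp_le_nrmn[of 0 n] \<open>1 \<le> n\<close> gauss_nrmn_int
    by (intro integral_mono') (auto simp: nrmn_nonneg)
  ultimately show ?thesis by simp
qed



lemma ipn_CS: "\<bar>ipn n u v\<bar> \<le> nrmn n u * nrmn n v"
proof -
  have "(ipn n u v)^2 \<le> (\<Sum>i<n. (u i)^2) * (\<Sum>i<n. (v i)^2)"
    unfolding ipn_def by (rule Cauchy_Schwarz_ineq_sum)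
  also have "\<dots> = (nrmn n u * nrmn n v)^2"
    by (simp add: power_mult_distrib nrmn_sq)
  finally have "sqrt ((ipn n u v)^2) \<le> sqrt ((nrmn n u * nrmn n v)^2)"
    by (rule real_sqrt_le_mono)
  then show ?thesis using nrmn_nonneg[of n u] nrmn_nonneg[of n v] by simp
qed

lemma conv_le:
  assumes "\<And>v. v \<in> S \<Longrightarrow> ipn n v g \<le> H" and "y \<in> conv_hull_n S"
  shows "ipn n y g \<le> H"
proof -
  obtain F c where F: "finite F" "F \<subseteq> S" "\<forall>v\<in>F. 0 \<le> c v" "sum c F = 1"
    and y: "y = (\<lambda>i. \<Sum>v\<in>F. c v * v i)"
    using assms(2) unfolding conv_hull_n_def by blast
  have "ipn n y g = (\<Sum>i<n. \<Sum>v\<in>F. c v * v i * g i)"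
    unfolding ipn_def y by (simp add: sum_distrib_right)
  also have "\<dots> = (\<Sum>v\<in>F. c v * ipn n v g)"
    unfolding ipn_def by (subst sum.swap) (simp add: sum_distrib_left mult.assoc)
  also have "\<dots> \<le> (\<Sum>v\<in>F. c v * H)"
    using F assms(1) by (intro sum_mono mult_left_mono) auto
  also have "\<dots> = H" using F(4) by (simp add: sum_distrib_right[symmetric])
  finally show ?thesis .
qed

lemma conv_mem: "v \<in> S \<Longrightarrow> v \<in> conv_hull_n S"
  unfolding conv_hull_n_def
  by (rule CollectI, rule exI[of _ "{v}"], rule exI[of _ "\<lambda>_. 1"]) auto

definition hQ :: "nat \<Rightarrow> nat \<Rightarrow> (nat \<Rightarrow> nat \<Rightarrow> real) \<Rightarrow> (nat \<Rightarrow> real) \<Rightarrow> real" where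
  "hQ n m x g = (MAX i\<in>{..<m}. \<bar>ipn n (x i) g\<bar>)"

lemma hQ_ge: "i < m \<Longrightarrow> \<bar>ipn n (x i) g\<bar> \<le> hQ n m x g"
  unfolding hQ_def by (rule Max_ge) auto

lemma hQ_attained: "0 < m \<Longrightarrow> \<exists>i<m. hQ n m x g = \<bar>ipn n (x i) g\<bar>"
proof -
  assume "0 < m"
  then have "hQ n m x g \<in> (\<lambda>i. \<bar>ipn n (x i) g\<bar>) ` {..<m}"
    unfolding hQ_def by (intro Max_in) auto
  then show ?thesis by auto
qed

lemma ipn_neg: "ipn n (\<lambda>j. - y j) g = - ipn n y g"
  by (simp add: ipn_def sum_negf)

lemma ipn_scale: "ipn n (\<lambda>j. y j / t) g = ipn n y g / t"
  by (simp add: ipn_def sum_divide_distrib)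

lemma Q_le: "z \<in> Qset m x \<Longrightarrow> ipn n z g \<le> hQ n m x g"
  unfolding Qset_def
proof (rule conv_le)
  fix v assume "v \<in> x ` {..<m} \<union> (\<lambda>i j. - x i j) ` {..<m}"
  then show "ipn n v g \<le> hQ n m x g"
  proof
    assume "v \<in> x ` {..<m}"
    then obtain i where "i < m" "v = x i" by auto
    then show ?thesis using hQ_ge[of i m n x g] by auto
  next
    assume "v \<in> (\<lambda>i j. - x i j) ` {..<m}"
    then obtain i where "i < m" "v = (\<lambda>j. - x i j)" by auto
    then show ?thesis using hQ_ge[of i m n x g] by (auto simp: ipn_neg)
  qed
qed

lemma ball_le: "v \<in> unit_ball_n n \<Longrightarrow> ipn n v g \<le> nrmn n g"
proof -
  assume "v \<in> unit_ball_n n"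
  then have "nrmn n v \<le> 1" by (simp add: unit_ball_n_def)
  then have "nrmn n v * nrmn n g \<le> nrmn n g"
    using nrmn_nonneg[of n g] by (simp add: mult_left_le_one_le nrmn_nonneg)
  then show ?thesis using ipn_CS[of n v g] by linarith
qed

definition uvec :: "nat \<Rightarrow> (nat \<Rightarrow> real) \<Rightarrow> nat \<Rightarrow> real" where
  "uvec n g = restrict (\<lambda>i. g i / nrmn n g) {..<n}"

lemma uvec_ipn: "ipn n (uvec n g) g = nrmn n g"
proof -
  have "ipn n (uvec n g) g = (\<Sum>i<n. (g i)^2) / nrmn n g"
    by (simp add: uvec_def ipn_def sum_divide_distrib power2_eq_square)
  also have "\<dots> = (nrmn n g)^2 / nrmn n g" by (simp add: nrmn_sq)
  also have "\<dots> = nrmn n g" by (simp add: power2_eq_square)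
  finally show ?thesis .
qed

lemma uvec_ball: "uvec n g \<in> unit_ball_n n"
proof -
  have "(nrmn n (uvec n g))^2 = (\<Sum>i<n. (g i)^2 / (nrmn n g)^2)"
    unfolding nrmn_sq[of n "uvec n g"] by (simp add: uvec_def power_divide)
  also have "\<dots> = (\<Sum>i<n. (g i)^2) / (nrmn n g)^2"
    by (rule sum_divide_distrib[symmetric])
  also have "\<dots> = (nrmn n g)^2 / (nrmn n g)^2" by (simp add: nrmn_sq)
  also have "\<dots> \<le> 1" by simp
  finally have "(nrmn n (uvec n g))^2 \<le> 1\<^sup>2" by simp
  then have "nrmn n (uvec n g) \<le> 1"
    by (rule power2_le_imp_le) simp
  moreover have "uvec n g \<in> Rn n" by (simp add: uvec_def Rn_def)
  ultimately show ?thesis by (simp add: unit_ball_n_def)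
qed

lemma SUP_ball: "(SUP y\<in>unit_ball_n n. ipn n y g) = nrmn n g"
proof (rule antisym)
  show "(SUP y\<in>unit_ball_n n. ipn n y g) \<le> nrmn n g"
    using uvec_ball by (intro cSUP_least) (auto intro: ball_le)
  have bdd: "bdd_above ((\<lambda>y. ipn n y g) ` unit_ball_n n)"
    using ball_le by (intro bdd_aboveI2) auto
  show "nrmn n g \<le> (SUP y\<in>unit_ball_n n. ipn n y g)"
    using uvec_ball[of n g] uvec_ipn[of n g]
    by (intro cSUP_upper2[OF bdd, of "uvec n g"]) auto
qed

lemma Qt_le:
  assumes "0 < t" "y \<in> Qt_set n m x t"
  shows "ipn n y g \<le> max (nrmn n g) (hQ n m x g / t)"
  using assms(2) unfolding Qt_set_def
proof (rule conv_le[rotated])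
  fix v assume "v \<in> (\<lambda>y j. y j / t) ` Qset m x \<union> unit_ball_n n"
  then show "ipn n v g \<le> max (nrmn n g) (hQ n m x g / t)"
  proof
    assume "v \<in> (\<lambda>y j. y j / t) ` Qset m x"
    then obtain z where "z \<in> Qset m x" "v = (\<lambda>j. z j / t)" by auto
    then have "ipn n v g = ipn n z g / t" "ipn n z g \<le> hQ n m x g"
      by (auto simp: ipn_scale Q_le)
    then have "ipn n v g \<le> hQ n m x g / t" using assms(1) by (simp add: divide_right_mono)
    then show ?thesis by linarith
  next
    assume "v \<in> unit_ball_n n"
    then show ?thesis using ball_le[of v n g] by linarith
  qed
qed

lemma x_in_Q: "i < m \<Longrightarrow> x i \<in> Qset m x" "i < m \<Longrightarrow> (\<lambda>j. - x i j) \<in> Qset m x"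
  unfolding Qset_def by (auto intro!: conv_mem)

lemma scaled_in_Qt: "z \<in> Qset m x \<Longrightarrow> (\<lambda>j. z j / t) \<in> Qt_set n m x t"
  unfolding Qt_set_def by (auto intro!: conv_mem)

lemma ball_in_Qt: "z \<in> unit_ball_n n \<Longrightarrow> z \<in> Qt_set n m x t"
  unfolding Qt_set_def by (auto intro!: conv_mem)

lemma SUP_Qt:
  assumes "0 < t" "0 < m"
  shows "(SUP y\<in>Qt_set n m x t. ipn n y g) = max (nrmn n g) (hQ n m x g / t)"
proof (rule antisym)
  show "(SUP y\<in>Qt_set n m x t. ipn n y g) \<le> max (nrmn n g) (hQ n m x g / t)"
  proof (rule cSUP_least)
    show "Qt_set n m x t \<noteq> {}" using ball_in_Qt[OF uvec_ball] by blast
    fix y assume "y \<in> Qt_set n m x t"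
    then show "ipn n y g \<le> max (nrmn n g) (hQ n m x g / t)" by (rule Qt_le[OF assms(1)])
  qed
  have bdd: "bdd_above ((\<lambda>y. ipn n y g) ` Qt_set n m x t)"
    by (rule bdd_aboveI2[where M="max (nrmn n g) (hQ n m x g / t)"], rule Qt_le[OF assms(1)])
  have 1: "nrmn n g \<le> (SUP y\<in>Qt_set n m x t. ipn n y g)"
    using uvec_ipn[of n g] ball_in_Qt[OF uvec_ball]
    by (intro cSUP_upper2[OF bdd, of "uvec n g"]) auto
  obtain i where i: "i < m" "hQ n m x g = \<bar>ipn n (x i) g\<bar>" using hQ_attained[OF assms(2)] by blast
  have a: "ipn n (x i) g / t \<le> (SUP y\<in>Qt_set n m x t. ipn n y g)"
    using scaled_in_Qt[OF x_in_Q(1)[OF i(1)]] ipn_scale[of n "x i" t g]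
    by (intro cSUP_upper2[OF bdd, of "\<lambda>j. x i j / t"]) auto
  have b: "- ipn n (x i) g / t \<le> (SUP y\<in>Qt_set n m x t. ipn n y g)"
    using scaled_in_Qt[OF x_in_Q(2)[OF i(1)]] ipn_scale[of n "\<lambda>j. - x i j" t g] ipn_neg[of n "x i" g]
    by (intro cSUP_upper2[OF bdd, of "\<lambda>j. - x i j / t"]) auto
  have 2: "hQ n m x g / t \<le> (SUP y\<in>Qt_set n m x t. ipn n y g)"
    using a b i(2) by (cases "0 \<le> ipn n (x i) g") auto
  show "max (nrmn n g) (hQ n m x g / t) \<le> (SUP y\<in>Qt_set n m x t. ipn n y g)"
    using 1 2 by simp
qed

lemma SUP_Q_le:
  assumes "0 < m"
  shows "(SUP y\<in>Qset m x. ipn n y g) \<le> hQ n m x g"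
  using x_in_Q(1)[of 0 m x] assms Q_le by (intro cSUP_least) auto



lemma ipn_P_meas: "(\<lambda>X. ipn n v X) \<in> borel_measurable (PiM {..<n} (\<lambda>_. borel))"
  unfolding ipn_def
  by (intro borel_measurable_sum borel_measurable_times borel_measurable_const
        measurable_component_singleton) auto

lemma hQ_meas: "(\<lambda>g. hQ n m x g) \<in> borel_measurable (gauss_meas n)"
  unfolding hQ_def
  by (intro borel_measurable_Max borel_measurable_abs ipn_meas) auto

lemma H_meas: "(\<lambda>g. max (nrmn n g) (hQ n m x g / t)) \<in> borel_measurable (gauss_meas n)"
  by (intro borel_measurable_max borel_measurable_divide hQ_meas nrmn_meas borel_measurable_const)

lemma hQ_le_norm:
  assumes "0 < m" "\<And>i. i < m \<Longrightarrow> nrmn n (x i) \<le> R"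
  shows "hQ n m x g \<le> R * nrmn n g"
proof -
  obtain i where i: "i < m" "hQ n m x g = \<bar>ipn n (x i) g\<bar>" using hQ_attained[OF assms(1), of n x g] by auto
  then show ?thesis using ipn_CS[of n "x i" g] assms(2)[OF i(1)] nrmn_nonneg[of n g]
    by (metis mult_right_mono order_trans)
qed

lemma uvec_nrmn: "0 < nrmn n g \<Longrightarrow> nrmn n (uvec n g) = 1"
proof -
  assume pos: "0 < nrmn n g"
  have "(nrmn n (uvec n g))^2 = (\<Sum>i<n. (g i)^2 / (nrmn n g)^2)"
    unfolding nrmn_sq[of n "uvec n g"] by (simp add: uvec_def power_divide)
  also have "\<dots> = (\<Sum>i<n. (g i)^2) / (nrmn n g)^2"
    by (rule sum_divide_distrib[symmetric])
  also have "\<dots> = (nrmn n g)^2 / (nrmn n g)^2" by (simp only: nrmn_sq)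
  also have "\<dots> = 1" using pos by simp
  finally have "(nrmn n (uvec n g))^2 = 1" .
  then show ?thesis unfolding nrmn_sq by (simp add: nrmn_def ipn_self)
qed

lemma uvec_Rn: "uvec n g \<in> Rn n" by (simp add: uvec_def Rn_def)

lemma ipn_uvec: "ipn n (uvec n y) z = ipn n y z / nrmn n y"
  unfolding ipn_def uvec_def by (simp add: sum_divide_distrib)

lemma ipn_sph: "ipn n y (\<lambda>i\<in>{..<n}. s * g i / r) = s * ipn n y g / r"
  unfolding ipn_def by (simp add: sum_divide_distrib sum_distrib_left mult.assoc mult.left_commute)

lemma good_arith:
  fixes a b y z c C0 C2 s t \<Delta> :: real
  assumes "0 < a" "0 < b" "\<bar>y\<bar> < c" "y = sqrt n * z / a / b" "b \<le> 2 * sqrt n / \<Delta>"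
    "\<Delta> = C0 * s" "c = C2 * s" "0 < s" "100 * C2 \<le> C0" "0 < C2" "0.02 \<le> t" "1 \<le> n"
  shows "\<bar>z\<bar> \<le> t * a"
proof -
  have sn: "0 < sqrt n" using assms(12) by simp
  have C0: "0 < C0" using assms(9,10) by simp
  have D: "0 < \<Delta>" using assms(6,8) C0 by simp
  have zz: "z = y * a * b / sqrt n" using assms(1,2,4) sn by (simp add: field_simps)
  have "1/50 \<le> t" using assms(11) by simp
  then have "C0 * (1/50) \<le> C0 * t" using C0 by (intro mult_left_mono) auto
  then have "2 * C2 \<le> C0 * t" using assms(9) by linarith
  then have h: "2 * C2 / C0 \<le> t" using C0 by (simp add: field_simps)
  have "\<bar>z\<bar> = \<bar>y\<bar> * a * b / sqrt n" unfolding zz using assms(1,2) sn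
    by (simp add: abs_mult abs_divide)
  also have "\<dots> \<le> c * a * (2 * sqrt n / \<Delta>) / sqrt n"
    using assms(1,2,3,5) sn by (intro divide_right_mono mult_mono) auto
  also have "\<dots> = 2 * C2 / C0 * a" using sn assms(6,7,8) C0 by (simp add: field_simps)
  also have "\<dots> \<le> t * a"
    by (rule mult_right_mono[OF h]) (use assms(1) in simp)
  finally show ?thesis .
qed

lemma ind_amgm:
  fixes K a r :: real and b :: bool
  assumes "0 \<le> K" "0 < a"
  shows "K * (if b then 1 else 0) * r \<le> K / 2 * (a * r^2 + (if b then 1 else 0) / a)"
proof (cases b)
  case True
  have "0 \<le> (a * r - 1)^2" by simp
  then have "2 * a * r \<le> a^2 * r^2 + 1" by (simp add: power2_eq_square algebra_simps)
  then have "2 * r \<le> a * r^2 + 1 / a" using assms(2)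
    by (simp add: field_simps power2_eq_square)
  then show ?thesis using True assms(1) mult_left_mono[of "2 * r" "a * r^2 + 1 / a" "K/2"]
    by (simp add: algebra_simps)
next
  case False
  then show ?thesis using assms by simp
qed

lemma main_bound:
  fixes C2 C0 t :: real
  assumes C2: "C2_prop C2" and C2pos: "0 < C2" and C0: "100 * C2 \<le> C0"
    and m2: "2 \<le> m" and n1: "1 \<le> n"
    and qo: "quasi_orth n m (C0 * sqrt (ln (real m))) x" and t: "0.02 \<le> t"
  shows "integral\<^sup>L (gauss_meas n) (\<lambda>g. max (nrmn n g) (hQ n m x g / t))
     \<le> integral\<^sup>L (gauss_meas n) (nrmn n) + 100 * real n / (C0 * sqrt (ln (real m))) * real m powr -5"
proof -
  define s where "s = sqrt (ln (real m))"
  define \<Delta> where "\<Delta> = C0 * s"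
  have spos: "0 < s" using m2 by (simp add: s_def)
  have C0pos: "0 < C0" using C2pos C0 by simp
  have Dpos: "0 < \<Delta>" using spos C0pos by (simp add: \<Delta>_def)
  have tpos: "0 < t" using t by simp
  have sn: "0 < sqrt (real n)" using n1 by simp
  have xn: "\<And>i. i < m \<Longrightarrow> x i \<in> Rn n \<and> sqrt (real n) / (2 * \<Delta>) \<le> nrmn n (x i)
      \<and> nrmn n (x i) \<le> 2 * sqrt (real n) / \<Delta>"
    using qo unfolding quasi_orth_def \<Delta>_def s_def by blast
  have xpos: "\<And>i. i < m \<Longrightarrow> 0 < nrmn n (x i)"
  proof -
    fix i assume "i < m"
    have "0 < sqrt (real n) / (2 * \<Delta>)" using sn Dpos by simp
    then show "0 < nrmn n (x i)" using xn[OF \<open>i < m\<close>] by linarith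
  qed
  define v where "v = (\<lambda>i. uvec n (x i))"
  have v: "\<forall>i<m. v i \<in> Rn n \<and> nrmn n (v i) = 1"
    using xpos by (simp add: v_def uvec_Rn uvec_nrmn)
  define f where "f = (\<lambda>g::nat\<Rightarrow>real. \<lambda>i\<in>{..<n}. sqrt (real n) * g i / nrmn n g)"
  define F where "F = (\<lambda>X. MAX i\<in>{..<m}. \<bar>ipn n (v i) X\<bar>)"
  define c where "c = C2 * s"
  define P where "P = PiM {..<n} (\<lambda>_. borel :: real measure)"
  define A where "A = {X \<in> space P. c \<le> F X}"
  have fmeas: "f \<in> measurable (gauss_meas n) P"
    unfolding f_def P_def
    by (intro measurable_restrict borel_measurable_divide borel_measurable_times
          borel_measurable_const comp_borel nrmn_meas)
  have Fmeas: "F \<in> borel_measurable P"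
    unfolding F_def P_def by (intro borel_measurable_Max borel_measurable_abs ipn_P_meas) auto
  have Aeq: "A = F -` {c..} \<inter> space P" by (auto simp: A_def)
  have Asets: "A \<in> sets P" unfolding Aeq by (rule measurable_sets[OF Fmeas]) simp
  define B where "B = f -` A \<inter> space (gauss_meas n)"
  have Bsets: "B \<in> sets (gauss_meas n)" unfolding B_def by (rule measurable_sets[OF fmeas Asets])
  have PB: "measure (gauss_meas n) B \<le> real m powr -10"
  proof -
    have "measure (sphere_unif_meas n) {X \<in> space (sphere_unif_meas n).
        (MAX i\<in>{..<m}. \<bar>ipn n (v i) X\<bar>) \<ge> C2 * sqrt (ln (real m))} \<le> real m powr -10"
    proof -
      have "1 \<le> m" using m2 by simp
      moreover have "sphere_unif_meas n \<in> {gauss_meas n, sphere_unif_meas n, ball_unif_meas n}" by simp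
      ultimately show ?thesis
        using C2[unfolded C2_prop_def, rule_format, where n=n and m=m and v=v and M="sphere_unif_meas n"] v by blast
    qed
    moreover have "{X \<in> space (sphere_unif_meas n).
        (MAX i\<in>{..<m}. \<bar>ipn n (v i) X\<bar>) \<ge> C2 * sqrt (ln (real m))} = A"
      by (simp add: A_def F_def c_def s_def sphere_unif_meas_def P_def)
    moreover have "measure (sphere_unif_meas n) A = measure (gauss_meas n) B"
      unfolding sphere_unif_meas_def B_def f_def[symmetric] P_def[symmetric]
      by (rule measure_distr[OF fmeas Asets])
    ultimately show ?thesis by simp
  qed
  define K where "K = 100 * sqrt (real n) / \<Delta>"
  have Kpos: "0 \<le> K" using sn Dpos by (simp add: K_def)
  have hQ_all: "hQ n m x g \<le> (2 * sqrt (real n) / \<Delta>) * nrmn n g" for g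
    using m2 xn by (intro hQ_le_norm) auto
  have good: "hQ n m x g \<le> t * nrmn n g" if g: "g \<in> space (gauss_meas n)" "g \<notin> B" for g
  proof -
    have "f g \<in> space P" using fmeas g(1) by (simp add: measurable_space)
    then have Fl: "F (f g) < c" using g by (auto simp: B_def A_def)
    have each: "\<bar>ipn n (x i) g\<bar> \<le> t * nrmn n g" if i: "i < m" for i
    proof (cases "nrmn n g = 0")
      case True
      then show ?thesis using ipn_CS[of n "x i" g] by simp
    next
      case False
      then have gpos: "0 < nrmn n g" using nrmn_nonneg[of n g] by simp
      have "\<bar>ipn n (v i) (f g)\<bar> \<le> F (f g)" unfolding F_def using i by (intro Max_ge) auto
      then have lt: "\<bar>ipn n (v i) (f g)\<bar> < c" using Fl by linarith
      have eq: "ipn n (v i) (f g) = sqrt (real n) * ipn n (x i) g / nrmn n g / nrmn n (x i)"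
        unfolding v_def f_def by (simp add: ipn_uvec ipn_sph)
      have bx: "nrmn n (x i) \<le> 2 * sqrt (real n) / \<Delta>" using xn[OF i] by blast
      have n1': "1 \<le> real n" using n1 by simp
      show ?thesis
        by (rule good_arith[OF gpos xpos[OF i] lt eq bx \<Delta>_def c_def spos C0 C2pos t n1'])
    qed
    obtain i where i: "i < m" "hQ n m x g = \<bar>ipn n (x i) g\<bar>"
      using hQ_attained[of m n x g] m2 by auto
    then show ?thesis using each by simp
  qed
  define a where "a = real m powr -5 / sqrt (real n)"
  have apos: "0 < a" using m2 sn by (simp add: a_def)
  define R where "R = (\<lambda>g. nrmn n g + K / 2 * (a * (nrmn n g)^2 + indicator B g / a))"
  have pt: "max (nrmn n g) (hQ n m x g / t) \<le> R g" if g: "g \<in> space (gauss_meas n)" for g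
  proof -
    have "max (nrmn n g) (hQ n m x g / t) \<le> nrmn n g + K * indicator B g * nrmn n g"
    proof (cases "g \<in> B")
      case True
      have "hQ n m x g / t \<le> (2 * sqrt (real n) / \<Delta>) * nrmn n g / t"
        using divide_right_mono[OF hQ_all[of g] less_imp_le[OF tpos]] by simp
      also have "\<dots> \<le> K * nrmn n g"
      proof -
        have "1 / t \<le> 50" using t by (simp add: field_simps)
        then have "(2 * sqrt (real n) / \<Delta>) * nrmn n g * (1 / t)
              \<le> (2 * sqrt (real n) / \<Delta>) * nrmn n g * 50"
          using sn Dpos nrmn_nonneg[of n g] by (intro mult_left_mono) auto
        then show ?thesis by (simp add: K_def)
      qed
      finally show ?thesis using True nrmn_nonneg[of n g] Kpos
        by (simp add: mult_nonneg_nonneg)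
    next
      case False
      have "hQ n m x g / t \<le> nrmn n g" using good[OF g False] tpos
        by (simp add: divide_le_eq mult.commute)
      then show ?thesis using False by simp
    qed
    also have "\<dots> \<le> R g"
      using ind_amgm[OF Kpos apos, of "g \<in> B" "nrmn n g"] Kpos apos
      unfolding R_def by (cases "g \<in> B") (simp_all add: indicator_def)
    finally show ?thesis .
  qed
  interpret gp: prob_space "gauss_meas n" by (rule gauss_prob)
  have intB: "integrable (gauss_meas n) (indicator B :: _ \<Rightarrow> real)"
    using Bsets by (intro integrable_real_indicator) (auto simp: gp.emeasure_eq_measure)
  have intR: "integrable (gauss_meas n) R"
    unfolding R_def using gauss_nrmn_int gauss_sq(1) intB
    by (intro Bochner_Integration.integrable_add Bochner_Integration.integrable_mult_right
        Bochner_Integration.integrable_divide) auto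
  have "integral\<^sup>L (gauss_meas n) (\<lambda>g. max (nrmn n g) (hQ n m x g / t)) \<le> integral\<^sup>L (gauss_meas n) R"
    using intR pt by (intro integral_mono') (auto simp: R_def nrmn_nonneg)
  also have "integral\<^sup>L (gauss_meas n) R = integral\<^sup>L (gauss_meas n) (nrmn n)
      + K / 2 * (a * real n + measure (gauss_meas n) B / a)"
    unfolding R_def using gauss_nrmn_int gauss_sq intB Bsets
    by (simp add: Bochner_Integration.integral_add Bochner_Integration.integrable_mult_right
        Bochner_Integration.integrable_divide)
  also have "\<dots> \<le> integral\<^sup>L (gauss_meas n) (nrmn n) + K / 2 * (a * real n + real m powr -10 / a)"
    using PB apos Kpos by (intro add_left_mono mult_left_mono divide_right_mono) auto
  also have "K / 2 * (a * real n + real m powr -10 / a) = 100 * real n / (C0 * sqrt (ln (real m))) * real m powr -5"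
  proof -
    define p where "p = real m powr -5"
    define q where "q = sqrt (real n)"
    have ppos: "0 < p" using m2 by (simp add: p_def)
    have qpos: "0 < q" using sn by (simp add: q_def)
    have nq: "real n = q * q" by (simp add: q_def)
    have p10: "real m powr -10 = p * p"
      unfolding p_def by (simp add: powr_add[symmetric])
    have e1: "a * real n = q * p" unfolding a_def nq p_def[symmetric] q_def[symmetric]
      using qpos by (simp add: field_simps)
    have e2: "real m powr -10 / a = q * p" unfolding a_def p10 p_def[symmetric] q_def[symmetric]
      using qpos ppos by (simp add: field_simps)
    have "K / 2 * (a * real n + real m powr -10 / a) = 100 * (q * q) / \<Delta> * p"
      unfolding e1 e2 K_def q_def[symmetric] by (simp add: field_simps)
    then show ?thesis unfolding nq[symmetric] p_def \<Delta>_def s_def .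
  qed
  finally show ?thesis .
qed



lemma C2_pos: assumes C: "C2_prop C2" shows "0 < C2"
proof (rule ccontr)
  assume neg: "\<not> 0 < C2"
  define v :: "nat \<Rightarrow> nat \<Rightarrow> real" where "v = (\<lambda>_. restrict (\<lambda>_. 1) {..<1})"
  have v: "\<forall>i<2. v i \<in> Rn 1 \<and> nrmn 1 (v i) = 1" by (simp add: v_def Rn_def nrmn_def ipn_def)
  have mem: "gauss_meas 1 \<in> {gauss_meas 1, sphere_unif_meas 1, ball_unif_meas 1}" by simp
  have le: "measure (gauss_meas 1) {X \<in> space (gauss_meas 1).
      (MAX i\<in>{..<2::nat}. \<bar>ipn 1 (v i) X\<bar>) \<ge> C2 * sqrt (ln (real (2::nat)))} \<le> real (2::nat) powr -10"
    using C[unfolded C2_prop_def, rule_format, where n=1 and m=2 and v=v and M="gauss_meas 1"] v mem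
    by simp
  have "{X \<in> space (gauss_meas 1).
      (MAX i\<in>{..<2::nat}. \<bar>ipn 1 (v i) X\<bar>) \<ge> C2 * sqrt (ln (real (2::nat)))} = space (gauss_meas 1)"
  proof -
    have "C2 * sqrt (ln (real (2::nat))) \<le> 0" using neg by (simp add: mult_nonpos_nonneg)
    moreover have "0 \<le> (MAX i\<in>{..<2::nat}. \<bar>ipn 1 (v i) X\<bar>)" for X
    proof -
      have "\<bar>ipn 1 (v 0) X\<bar> \<le> (MAX i\<in>{..<2::nat}. \<bar>ipn 1 (v i) X\<bar>)" by (rule Max_ge) auto
      then show ?thesis by (meson abs_ge_zero order_trans)
    qed
    ultimately show ?thesis by (auto intro: order_trans)
  qed
  moreover have "measure (gauss_meas 1) (space (gauss_meas 1)) = 1"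
    using gauss_prob prob_space.prob_space by blast
  ultimately have "1 \<le> real (2::nat) powr -10" using le by simp
  moreover have "real (2::nat) powr -10 < 1" by (simp add: powr_less_one)
  ultimately show False by simp
qed

lemma H_int:
  assumes "0 < t" "0 < m" "\<And>i. i < m \<Longrightarrow> nrmn n (x i) \<le> R"
  shows "integrable (gauss_meas n) (\<lambda>g. max (nrmn n g) (hQ n m x g / t))"
proof (rule Bochner_Integration.integrable_bound[OF _ H_meas AE_I2])
  show "integrable (gauss_meas n) (\<lambda>g. (1 + \<bar>R\<bar> / t) * nrmn n g)"
    using gauss_nrmn_int by (rule Bochner_Integration.integrable_mult_right)
  fix g
  have h0: "0 \<le> hQ n m x g" using hQ_ge[of 0 m n x g] assms(2) by simp
  have h1: "hQ n m x g \<le> \<bar>R\<bar> * nrmn n g"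
    using hQ_le_norm[OF assms(2), of n x R g] assms(3) nrmn_nonneg[of n g]
    by (meson abs_ge_self mult_right_mono order_trans)
  have "hQ n m x g / t \<le> \<bar>R\<bar> * nrmn n g / t" using h1 assms(1) by (simp add: divide_right_mono)
  then have "max (nrmn n g) (hQ n m x g / t) \<le> (1 + \<bar>R\<bar> / t) * nrmn n g"
    using nrmn_nonneg[of n g] assms(1) by (auto simp: algebra_simps)
  moreover have "0 \<le> max (nrmn n g) (hQ n m x g / t)" using nrmn_nonneg[of n g] by simp
  moreover have "0 \<le> (1 + \<bar>R\<bar> / t) * nrmn n g" using nrmn_nonneg[of n g] assms(1) by simp
  ultimately show "norm (max (nrmn n g) (hQ n m x g / t)) \<le> norm ((1 + \<bar>R\<bar> / t) * nrmn n g)"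
    unfolding real_norm_def by linarith
qed



lemma width_ball: "gauss_width n (unit_ball_n n) = integral\<^sup>L (gauss_meas n) (nrmn n)"
  unfolding gauss_width_def by (simp add: SUP_ball)

lemma width_Qt: "0 < t \<Longrightarrow> 0 < m \<Longrightarrow>
   gauss_width n (Qt_set n m x t) = integral\<^sup>L (gauss_meas n) (\<lambda>g. max (nrmn n g) (hQ n m x g / t))"
  unfolding gauss_width_def by (simp add: SUP_Qt)

lemma sqrt_2pi: "1/2 \<le> sqrt (2/pi)"
proof -
  have "1/4 \<le> 2/pi" using pi_less_4 pi_gt_zero by (simp add: field_simps)
  then have "sqrt (1/4) \<le> sqrt (2/pi)" by (rule real_sqrt_le_mono)
  moreover have "sqrt (1/4) = (1/2::real)" by (simp add: real_sqrt_divide)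
  ultimately show ?thesis by simp
qed

lemma final_arith:
  fixes C0 L n m :: real
  assumes C0: "0 < C0" and L: "0 < L" and Lm: "L \<le> sqrt (ln m)"
    and n: "200 / (C0^3 * L) \<le> n" and n1: "1 \<le> n" and m: "C0 * n \<le> m" and m2: "2 \<le> m"
  shows "100 * n / (C0 * sqrt (ln m)) * m powr -5 \<le> m powr -3 * sqrt (2/pi)"
proof -
  have mpos: "0 < m" using m2 by simp
  have q: "C0 * L \<le> C0 * sqrt (ln m)" using Lm C0 by simp
  have qpos: "0 < C0 * L" using C0 L by simp
  have a1: "100 * n / (C0 * sqrt (ln m)) \<le> 100 * n / (C0 * L)"
    using q qpos n1 by (intro divide_left_mono) auto
  have "200 \<le> C0^3 * L * n" using n C0 L by (simp add: field_simps)
  then have "100 * n \<le> (C0 * n)^2 / 2 * (C0 * L)"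
    using n1 by (simp add: power2_eq_square power3_eq_cube algebra_simps)
  then have a2: "100 * n / (C0 * L) \<le> (C0 * n)^2 / 2" using qpos by (simp add: divide_le_eq)
  have "(C0 * n)^2 \<le> m^2" using m C0 n1 by (intro power_mono) auto
  then have a3: "100 * n / (C0 * sqrt (ln m)) \<le> m^2 / 2" using a1 a2 by linarith
  have p5: "m powr -5 = m powr -3 / m^2"
  proof -
    have "m powr -5 = m powr -3 * m powr -2" by (simp add: powr_add[symmetric])
    also have "m powr -2 = 1 / m^2" using mpos by (simp add: powr_minus powr_realpow inverse_eq_divide)
    finally show ?thesis by simp
  qed
  have "100 * n / (C0 * sqrt (ln m)) * m powr -5 = m powr -3 * (100 * n / (C0 * sqrt (ln m)) / m^2)"
    unfolding p5 by simp
  also have "\<dots> \<le> m powr -3 * (1/2)"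
  proof (rule mult_left_mono)
    have gen: "\<forall>A::real. A \<le> m^2 / 2 \<longrightarrow> A / m^2 \<le> 1/2" using mpos by (simp add: field_simps)
    show "100 * n / (C0 * sqrt (ln m)) / m^2 \<le> 1/2" using gen a3 by blast
  qed simp
  also have "\<dots> \<le> m powr -3 * sqrt (2/pi)" using sqrt_2pi by (intro mult_left_mono) auto
  finally show ?thesis .
qed

theorem lemma3p3:
  fixes C1 C2 :: real
  assumes "C1_prop C1" and "C2_prop C2"
  shows "\<exists>N::nat. \<forall>n\<ge>N. \<forall>(m::nat) (x::nat \<Rightarrow> nat \<Rightarrow> real).
     max C1 (100 * C2) * real n \<le> real m \<longrightarrow> real m \<le> exp (real n / max C1 (100 * C2)) \<longrightarrow>
     quasi_orth n m (max C1 (100 * C2) * sqrt (ln (real m))) x \<longrightarrow>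
       (\<forall>t::real. t \<ge> 0.02 \<longrightarrow>
          gauss_width n (Qt_set n m x t) \<le> (1 + real m powr (-3)) * gauss_width n (unit_ball_n n))
     \<and> gauss_width n (Qset m x) \<le> 0.02 * gauss_width n (Qt_set n m x 0.02)
     \<and> 0.02 * gauss_width n (Qt_set n m x 0.02) \<le> 0.05 * gauss_width n (unit_ball_n n)"
proof -
  have C2pos: "0 < C2" by (rule C2_pos[OF assms(2)])
  define C0 where "C0 = max C1 (100 * C2)"
  have C0ge: "100 * C2 \<le> C0" by (simp add: C0_def)
  have C0pos: "0 < C0" using C0ge C2pos by simp
  define L where "L = sqrt (ln 2)"
  have Lpos: "0 < L" by (simp add: L_def)
  define N where "N = nat \<lceil>200 / (C0^3 * L) + 2 / C0\<rceil> + 1"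
  show ?thesis unfolding C0_def[symmetric]
  proof (intro exI[of _ N] allI impI)
    fix n m :: nat and x :: "nat \<Rightarrow> nat \<Rightarrow> real"
    assume nN: "N \<le> n" and mlo: "C0 * real n \<le> real m" and mhi: "real m \<le> exp (real n / C0)"
      and qo: "quasi_orth n m (C0 * sqrt (ln (real m))) x"
    have nbig: "200 / (C0^3 * L) + 2 / C0 \<le> real n"
      using nN unfolding N_def by linarith
    have n1: "1 \<le> n" using nN unfolding N_def by simp
    have "0 \<le> 200 / (C0^3 * L)" using C0pos Lpos by simp
    then have "2 / C0 \<le> real n" using nbig by linarith
    then have "2 \<le> C0 * real n" using C0pos by (simp add: divide_le_eq mult.commute)
    then have m2r: "2 \<le> real m" using mlo by linarith
    then have m2: "2 \<le> m" by simp
    have mpos: "0 < m" using m2 by simp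
    have Lm: "L \<le> sqrt (ln (real m))" unfolding L_def using m2r by simp
    have n200: "200 / (C0^3 * L) \<le> real n" using nbig C0pos
      by (metis add_increasing2 divide_nonneg_pos less_eq_real_def order_trans zero_le_numeral)
    have key: "100 * real n / (C0 * sqrt (ln (real m))) * real m powr -5 \<le> real m powr -3 * sqrt (2/pi)"
      by (rule final_arith[OF C0pos Lpos Lm n200 _ mlo m2r]) (use n1 in simp)
    have wB: "sqrt (2/pi) \<le> gauss_width n (unit_ball_n n)"
      unfolding width_ball using gauss_nrmn_lower[OF n1] .
    have "0 \<le> sqrt (2/pi)" by simp
    then have wB0: "0 \<le> gauss_width n (unit_ball_n n)" using wB by linarith
    have part1: "gauss_width n (Qt_set n m x t) \<le> (1 + real m powr (-3)) * gauss_width n (unit_ball_n n)"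
      if t: "0.02 \<le> t" for t
    proof -
      have tpos: "0 < t" using t by simp
      have "gauss_width n (Qt_set n m x t)
         \<le> integral\<^sup>L (gauss_meas n) (nrmn n) + 100 * real n / (C0 * sqrt (ln (real m))) * real m powr -5"
        unfolding width_Qt[OF tpos mpos]
        by (rule main_bound[OF assms(2) C2pos C0ge m2 n1 qo t])
      also have "\<dots> \<le> gauss_width n (unit_ball_n n) + real m powr -3 * gauss_width n (unit_ball_n n)"
      proof -
        have "real m powr -3 * sqrt (2/pi) \<le> real m powr -3 * gauss_width n (unit_ball_n n)"
          using wB by (intro mult_left_mono) auto
        then show ?thesis using key unfolding width_ball by linarith
      qed
      finally show ?thesis by (simp add: algebra_simps)
    qed
    have xb: "\<And>i. i < m \<Longrightarrow> nrmn n (x i) \<le> 2 * sqrt (real n) / (C0 * sqrt (ln (real m)))"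
      using qo unfolding quasi_orth_def by blast
    have Hint: "integrable (gauss_meas n) (\<lambda>g. max (nrmn n g) (hQ n m x g / 0.02))"
      by (rule H_int[OF _ mpos xb]) simp
    have part2: "gauss_width n (Qset m x) \<le> 0.02 * gauss_width n (Qt_set n m x 0.02)"
    proof -
      have "gauss_width n (Qset m x) \<le> integral\<^sup>L (gauss_meas n) (\<lambda>g. 0.02 * max (nrmn n g) (hQ n m x g / 0.02))"
        unfolding gauss_width_def
      proof (rule integral_mono')
        show "integrable (gauss_meas n) (\<lambda>g. 0.02 * max (nrmn n g) (hQ n m x g / 0.02))"
          using Hint by (rule Bochner_Integration.integrable_mult_right)
        fix g
        have "(SUP y\<in>Qset m x. ipn n y g) \<le> hQ n m x g" by (rule SUP_Q_le[OF mpos])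
        also have "\<dots> \<le> 0.02 * max (nrmn n g) (hQ n m x g / 0.02)" by simp
        finally show "(SUP y\<in>Qset m x. ipn n y g) \<le> 0.02 * max (nrmn n g) (hQ n m x g / 0.02)" .
        show "0 \<le> 0.02 * max (nrmn n g) (hQ n m x g / 0.02)" using nrmn_nonneg[of n g] by simp
      qed
      also have "\<dots> = 0.02 * gauss_width n (Qt_set n m x 0.02)"
        by (simp add: width_Qt[OF _ mpos])
      finally show ?thesis .
    qed
    have part3: "0.02 * gauss_width n (Qt_set n m x 0.02) \<le> 0.05 * gauss_width n (unit_ball_n n)"
    proof -
      have "0.02 * gauss_width n (Qt_set n m x 0.02) \<le> 0.02 * ((1 + real m powr (-3)) * gauss_width n (unit_ball_n n))"
        using part1[of "0.02"] by simp
      also have "\<dots> \<le> 0.02 * (2 * gauss_width n (unit_ball_n n))"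
      proof -
        have "real m powr (-3) \<le> 1" using m2r by (simp add: powr_le_one_le ge_one_powr_ge_zero powr_minus_divide)
        then show ?thesis using wB0 by (intro mult_left_mono mult_right_mono) auto
      qed
      also have "\<dots> \<le> 0.05 * gauss_width n (unit_ball_n n)" using wB0 by simp
      finally show ?thesis .
    qed
    show "(\<forall>t. 0.02 \<le> t \<longrightarrow> gauss_width n (Qt_set n m x t) \<le> (1 + real m powr (-3)) * gauss_width n (unit_ball_n n))
       \<and> gauss_width n (Qset m x) \<le> 0.02 * gauss_width n (Qt_set n m x 0.02)
       \<and> 0.02 * gauss_width n (Qt_set n m x 0.02) \<le> 0.05 * gauss_width n (unit_ball_n n)"
      using part1 part2 part3 by blast
  qed
qed


end
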